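(* Let $a<b$, $F:(a,b)\to\mathcal{K}(\mathbb{R}^n)$, $x_0\in(a,b)$, $\alpha>0$, and suppose $F$ is metrically $\alpha$-differentiable at $x_0$ with constant $L>0$, i.e. $F$ is metrically differentiable at $x_0$ and there is $\delta>0$ such that $\sup_{y\in F(x_0)}\mathrm{haus}([x_0,x]^MF|_y,D^M_+F(x_0)|_y)\le L|x-x_0|^\alpha$ for $0<x-x_0<\delta$ and $\sup_{y\in F(x_0)}\mathrm{haus}([x_0,x]^MF|_y,D^M_-F(x_0)|_y)\le L|x-x_0|^\alpha$ for $0<x_0-x<\delta$. Then for all $x\in(a,b)$ with $|x-x_0|<\delta$, $$\mathrm{haus}(F(x),L^MF(x))\le L|x-x_0|^{1+\alpha}.$$
   Context: $\mathcal{K}(\mathbb{R}^n)$ is the set of nonempty compact subsets of $\mathbb{R}^n$, $|\cdot|$ the Euclidean norm, $\mathrm{dist}(x,A)=\min_{a\in A}|x-a|$, $\mathrm{haus}$ the Hausdorff distance. For $a\in\mathbb{R}^n$, $B\in\mathcal{K}(\mathbb{R}^n)$, $\Pi_B(a)=\{b\in B:|a-b|=\mathrm{dist}(a,B)\}$; for $A,B\in\mathcal{K}(\mathbb{R}^n)$, $\Pi(A,B)=\{(a,b)\in A\times B: a\in\Pi_A(b)\text{ or }b\in\Pi_B(a)\}$. For $x\ne x_0$, $y_0\in F(x_0)$: $[x_0,x]^MF|_{y_0}=\{\frac{y-y_0}{x-x_0}:(y_0,y)\in\Pi(F(x_0),F(x))\}$. $F$ is metrically differentiable from the right at $x_0$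 if for every $y\in F(x_0)$ there is a nonempty set $D^M_+F(x_0)|_y$ with $\sup_{y\in F(x_0)}\mathrm{haus}(D^M_+F(x_0)|_y,[x_0,x]^MF|_y)\to0$ as $x\to x_0^+$; from the left analogously with $D^M_-F(x_0)|_y$ and $x\to x_0^-$; metrically differentiable means both. The local metric linear approximant is $L^MF(x)=\bigcup_{y\in F(x_0)}\big(\{y\}+(x-x_0)D^M_+F(x_0)|_y\big)$ for $x\ge x_0$ and $L^MF(x)=\bigcup_{y\in F(x_0)}\big(\{y\}+(x-x_0)D^M_-F(x_0)|_y\big)$ for $x<x_0$, where $\{c\}+\lambda A=\{c+\lambda a:a\in A\}$. *)

theory Defs
  imports "HOL-Analysis.Analysis" "HOL-Library.Extended_Real"
begin

text \<open>Hausdorff distance, valued in the extended reals (so that it is \<open>\<infinity>\<close> for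
  unbounded sets, as in the usual convention).\<close>
definition haus :: "'a::metric_space set \<Rightarrow> 'a set \<Rightarrow> ereal" where
  "haus A B = max (SUP a\<in>A. ereal (infdist a B)) (SUP b\<in>B. ereal (infdist b A))"

definition metric_proj :: "'a::metric_space \<Rightarrow> 'a set \<Rightarrow> 'a set" where
  "metric_proj a B = {b \<in> B. dist a b = infdist a B}"

definition metric_pairs :: "'a::metric_space set \<Rightarrow> 'a set \<Rightarrow> ('a \<times> 'a) set" where
  "metric_pairs A B = {(a, b). a \<in> A \<and> b \<in> B \<and> (a \<in> metric_proj b A \<or> b \<in> metric_proj a B)}"

definition metric_dd :: "(real \<Rightarrow> 'a::real_normed_vector set) \<Rightarrow> real \<Rightarrow> real \<Rightarrow> 'a \<Rightarrow> 'a set" where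
  "metric_dd F x0 x y0 = {(y - y0) /\<^sub>R (x - x0) | y. (y0, y) \<in> metric_pairs (F x0) (F x)}"

definition metric_deriv_right :: "(real \<Rightarrow> 'a::real_normed_vector set) \<Rightarrow> real \<Rightarrow> ('a \<Rightarrow> 'a set) \<Rightarrow> bool" where
  "metric_deriv_right F x0 D \<longleftrightarrow> (\<forall>y\<in>F x0. D y \<noteq> {}) \<and>
     (\<forall>\<epsilon>>0. eventually (\<lambda>x. \<forall>y\<in>F x0. haus (D y) (metric_dd F x0 x y) \<le> ereal \<epsilon>) (at_right x0))"

definition metric_deriv_left :: "(real \<Rightarrow> 'a::real_normed_vector set) \<Rightarrow> real \<Rightarrow> ('a \<Rightarrow> 'a set) \<Rightarrow> bool" where
  "metric_deriv_left F x0 D \<longleftrightarrow> (\<forall>y\<in>F x0. D y \<noteq> {}) \<and>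
     (\<forall>\<epsilon>>0. eventually (\<lambda>x. \<forall>y\<in>F x0. haus (D y) (metric_dd F x0 x y) \<le> ereal \<epsilon>) (at_left x0))"

definition metric_lin_approx :: "(real \<Rightarrow> 'a::real_normed_vector set) \<Rightarrow> real \<Rightarrow> ('a \<Rightarrow> 'a set) \<Rightarrow> ('a \<Rightarrow> 'a set) \<Rightarrow> real \<Rightarrow> 'a set" where
  "metric_lin_approx F x0 Dp Dm x =
     (if x \<ge> x0 then (\<Union>y\<in>F x0. (\<lambda>d. y + (x - x0) *\<^sub>R d) ` Dp y)
      else (\<Union>y\<in>F x0. (\<lambda>d. y + (x - x0) *\<^sub>R d) ` Dm y))"

end

theory Submission
  imports Defs
begin

lemma infdist_geI: "A \<noteq> {} \<Longrightarrow> (\<And>a. a\<in>A \<Longrightarrow> c \<le> dist x a) \<Longrightarrow> c \<le> infdist x A"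
  by (simp add: infdist_notempty cINF_greatest)

lemma infdist_le_haus1: "a \<in> A \<Longrightarrow> ereal (infdist a B) \<le> haus A B"
  unfolding haus_def by (meson SUP_upper max.coboundedI1)

lemma infdist_le_haus2: "b \<in> B \<Longrightarrow> ereal (infdist b A) \<le> haus A B"
  unfolding haus_def by (meson SUP_upper max.coboundedI2)

lemma haus_leI:
  assumes "\<And>a. a \<in> A \<Longrightarrow> infdist a B \<le> c" "\<And>b. b \<in> B \<Longrightarrow> infdist b A \<le> c"
  shows "haus A B \<le> ereal c"
  unfolding haus_def using assms by (auto intro!: SUP_least)

lemma dist_scale:
  fixes y z d :: "'a::real_normed_vector"
  assumes "h \<noteq> 0"
  shows "dist z (y + h *\<^sub>R d) = \<bar>h\<bar> * dist ((z - y) /\<^sub>R h) d"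
proof -
  have "z - (y + h *\<^sub>R d) = h *\<^sub>R ((z - y) /\<^sub>R h - d)"
    using assms by (simp add: algebra_simps)
  then show ?thesis by (simp add: dist_norm)
qed

lemma key:
  fixes A B :: "'a::euclidean_space set" and D :: "'a \<Rightarrow> 'a set"
  assumes A: "compact A" "A \<noteq> {}" and B: "compact B" "B \<noteq> {}" and h: "h \<noteq> 0"
    and D: "\<And>y. y \<in> A \<Longrightarrow> D y \<noteq> {}"
    and H: "\<forall>y\<in>A. haus {(z - y) /\<^sub>R h | z. (y, z) \<in> metric_pairs A B} (D y) \<le> ereal c"
  shows "haus B (\<Union>y\<in>A. (\<lambda>d. y + h *\<^sub>R d) ` D y) \<le> ereal (\<bar>h\<bar> * c)"
proof (rule haus_leI)
  fix z assume z: "z \<in> B"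
  obtain y where y: "y \<in> A" "infdist z A = dist z y"
    using infdist_attains_inf[of A z] A compact_imp_closed by blast
  have "(y, z) \<in> metric_pairs A B"
    using y z by (auto simp: metric_pairs_def metric_proj_def dist_commute)
  then have e: "(z - y) /\<^sub>R h \<in> {(z - y) /\<^sub>R h | z. (y, z) \<in> metric_pairs A B}" by blast
  have "ereal (infdist ((z - y) /\<^sub>R h) (D y)) \<le> ereal c"
    using infdist_le_haus1[OF e] H y(1) order_trans by blast
  then have ic: "infdist ((z - y) /\<^sub>R h) (D y) \<le> c" by simp
  have m: "infdist z (\<Union>y\<in>A. (\<lambda>d. y + h *\<^sub>R d) ` D y) \<le> infdist z ((\<lambda>d. y + h *\<^sub>R d) ` D y)"
    using y(1) D[OF y(1)] by (intro infdist_mono) auto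
  have q: "infdist z ((\<lambda>d. y + h *\<^sub>R d) ` D y) / \<bar>h\<bar> \<le> infdist ((z - y) /\<^sub>R h) (D y)"
  proof (rule infdist_geI)
    show "D y \<noteq> {}" using D y by auto
    fix d assume "d \<in> D y"
    then have "infdist z ((\<lambda>d. y + h *\<^sub>R d) ` D y) \<le> \<bar>h\<bar> * dist ((z - y) /\<^sub>R h) d"
      using infdist_le[of "y + h *\<^sub>R d"] dist_scale[OF h] by (metis imageI)
    then show "infdist z ((\<lambda>d. y + h *\<^sub>R d) ` D y) / \<bar>h\<bar> \<le> dist ((z - y) /\<^sub>R h) d"
      using h by (simp add: divide_le_eq mult.commute)
  qed
  have "infdist z ((\<lambda>d. y + h *\<^sub>R d) ` D y) \<le> \<bar>h\<bar> * c"
  proof -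
    have "infdist z ((\<lambda>d. y + h *\<^sub>R d) ` D y) / \<bar>h\<bar> \<le> c" using q ic by linarith
    then show ?thesis using h by (simp add: pos_divide_le_eq mult.commute)
  qed
  then show "infdist z (\<Union>y\<in>A. (\<lambda>d. y + h *\<^sub>R d) ` D y) \<le> \<bar>h\<bar> * c"
    using m by linarith
next
  fix w assume "w \<in> (\<Union>y\<in>A. (\<lambda>d. y + h *\<^sub>R d) ` D y)"
  then obtain y d where y: "y \<in> A" and d: "d \<in> D y" and w: "w = y + h *\<^sub>R d" by blast
  define E where "E = {(z - y) /\<^sub>R h | z. (y, z) \<in> metric_pairs A B}"
  obtain z where z: "z \<in> B" "infdist y B = dist y z"
    using infdist_attains_inf[of B y] B compact_imp_closed by blast
  have "(y, z) \<in> metric_pairs A B"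
    using y z by (auto simp: metric_pairs_def metric_proj_def)
  then have En: "E \<noteq> {}" unfolding E_def by blast
  have "ereal (infdist d E) \<le> ereal c"
    using infdist_le_haus2[OF d, of E] H y unfolding E_def using order_trans by blast
  then have ic: "infdist d E \<le> c" by simp
  have "infdist w B / \<bar>h\<bar> \<le> infdist d E"
  proof (rule infdist_geI[OF En])
    fix e assume "e \<in> E"
    then obtain z' where z': "z' \<in> B" "e = (z' - y) /\<^sub>R h"
      unfolding E_def metric_pairs_def by blast
    have "infdist w B \<le> \<bar>h\<bar> * dist e d"
      using infdist_le[OF z'(1), of w] dist_scale[OF h, of z' y d] z'(2) w
      by (simp add: dist_commute)
    then show "infdist w B / \<bar>h\<bar> \<le> dist d e"
      using h by (simp add: divide_le_eq mult.commute dist_commute)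
  qed
  then show "infdist w B \<le> \<bar>h\<bar> * c"
  proof -
    have "infdist w B / \<bar>h\<bar> \<le> c" using \<open>infdist w B / \<bar>h\<bar> \<le> infdist d E\<close> ic by linarith
    then show ?thesis using h by (simp add: pos_divide_le_eq mult.commute)
  qed
qed

theorem mainTheorem3:
  fixes F :: "real \<Rightarrow> (real ^ 'n) set"
    and a b x0 \<alpha> L \<delta> :: real
    and Dp Dm :: "real ^ 'n \<Rightarrow> (real ^ 'n) set"
  assumes "a < b"
    and "\<And>x. x \<in> {a<..<b} \<Longrightarrow> F x \<noteq> {} \<and> compact (F x)"
    and "x0 \<in> {a<..<b}"
    and "\<alpha> > 0" and "L > 0"
    and "metric_deriv_right F x0 Dp"
    and "metric_deriv_left F x0 Dm"
    and "\<delta> > 0"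
    and "\<And>x. x \<in> {a<..<b} \<Longrightarrow> 0 < x - x0 \<Longrightarrow> x - x0 < \<delta> \<Longrightarrow>
           \<forall>y\<in>F x0. haus (metric_dd F x0 x y) (Dp y) \<le> ereal (L * \<bar>x - x0\<bar> powr \<alpha>)"
    and "\<And>x. x \<in> {a<..<b} \<Longrightarrow> 0 < x0 - x \<Longrightarrow> x0 - x < \<delta> \<Longrightarrow>
           \<forall>y\<in>F x0. haus (metric_dd F x0 x y) (Dm y) \<le> ereal (L * \<bar>x - x0\<bar> powr \<alpha>)"
  shows "\<forall>x\<in>{a<..<b}. \<bar>x - x0\<bar> < \<delta> \<longrightarrow>
           haus (F x) (metric_lin_approx F x0 Dp Dm x) \<le> ereal (L * \<bar>x - x0\<bar> powr (1 + \<alpha>))"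
proof (intro ballI impI)
  fix x assume x: "x \<in> {a<..<b}" and xd: "\<bar>x - x0\<bar> < \<delta>"
  have A: "compact (F x0)" "F x0 \<noteq> {}" using assms(2)[OF assms(3)] by auto
  have B: "compact (F x)" "F x \<noteq> {}" using assms(2)[OF x] by auto
  have Dp: "\<And>y. y \<in> F x0 \<Longrightarrow> Dp y \<noteq> {}" using assms(6) unfolding metric_deriv_right_def by blast
  have Dm: "\<And>y. y \<in> F x0 \<Longrightarrow> Dm y \<noteq> {}" using assms(7) unfolding metric_deriv_left_def by blast
  have pw: "\<bar>x - x0\<bar> * (L * \<bar>x - x0\<bar> powr \<alpha>) = L * \<bar>x - x0\<bar> powr (1 + \<alpha>)" if "x \<noteq> x0"
    using that by (simp add: powr_add)
  consider "x = x0" | "x > x0" | "x < x0" by linarith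
  then show "haus (F x) (metric_lin_approx F x0 Dp Dm x) \<le> ereal (L * \<bar>x - x0\<bar> powr (1 + \<alpha>))"
  proof cases
    case 1
    have "metric_lin_approx F x0 Dp Dm x = F x0"
      unfolding metric_lin_approx_def 1 using Dp by (auto simp: image_constant_conv)
    then show ?thesis using 1 by (auto intro!: haus_leI)
  next
    case 2
    have "haus (F x) (\<Union>y\<in>F x0. (\<lambda>d. y + (x - x0) *\<^sub>R d) ` Dp y) \<le> ereal (\<bar>x - x0\<bar> * (L * \<bar>x - x0\<bar> powr \<alpha>))"
      apply (rule key[OF A B _ Dp])
      using 2 assms(9)[OF x] xd by (auto simp: metric_dd_def)
    moreover have "metric_lin_approx F x0 Dp Dm x = (\<Union>y\<in>F x0. (\<lambda>d. y + (x - x0) *\<^sub>R d) ` Dp y)"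
      unfolding metric_lin_approx_def using 2 by simp
    moreover have "x \<noteq> x0" using 2 by simp
    ultimately show ?thesis using pw by metis
  next
    case 3
    have "haus (F x) (\<Union>y\<in>F x0. (\<lambda>d. y + (x - x0) *\<^sub>R d) ` Dm y) \<le> ereal (\<bar>x - x0\<bar> * (L * \<bar>x - x0\<bar> powr \<alpha>))"
      apply (rule key[OF A B _ Dm])
      using 3 assms(10)[OF x] xd by (auto simp: metric_dd_def)
    moreover have "metric_lin_approx F x0 Dp Dm x = (\<Union>y\<in>F x0. (\<lambda>d. y + (x - x0) *\<^sub>R d) ` Dm y)"
      unfolding metric_lin_approx_def using 3 by simp
    moreover have "x \<noteq> x0" using 3 by simp
    ultimately show ?thesis using pw by metis
  qed
qed

end
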